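(* Let $n\ge 3$. A polygon $Q\in\mathbf S(s_1,\dots,s_n)$ is a critical point of the restriction of $\mathcal P$ to the smooth manifold $\mathbf S(s_1,\dots,s_n)$ if and only if $Q$ is tangential.
   Context: Fix $n\ge 3$ pairwise non-parallel lines $s_1,\dots,s_n\subset\mathbb{R}^2$ through the origin, each with a fixed direction $\vec s_i$. For lines $e_i\parallel s_i$, $Q=Q(e_1,\dots,e_n)$ is the closed polygon with consecutive vertices $v_i=e_i\cap e_{i+1}$ (indices mod $n$), and $\widetilde{\mathbf S}(s_1,\dots,s_n)$ is the space of such polygons modulo translations. Oriented area: $\mathcal A=\frac12\sum_i(x_iy_{i+1}-x_{i+1}y_i)$ for vertices $v_i=(x_i,y_i)$. $\mathbf S(s_1,\dots,s_n)=\{Q\in\widetilde{\mathbf S}:|\mathcal A(Q)|=1\}$. Each $e_i$ is oriented along $\vec s_i$, giving $\vec e_i$; the perimeter is $\mathcal P(Q)=\sum_i\operatorname{sign}_Q(i)|v_iv_{i+1}|$ with $\operatorname{sign}_Q(i)=1$ if $\vec e_i$ is codirected with $\overrightarrow{v_iv_{i+1}}$ and $-1$ otherwise (a linear function on $\widetilde{\mathbf S}$). $Q$ is tangential if there is a circle $\sigma$ tangent to every $e_i$ such that either $\sigma$ lies to the left of all $\vec e_i$ or $\sigma$ lies to the right of all $\vec e_i$. *)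

theory Defs
  imports "HOL-Analysis.Analysis"
begin

text \<open>Planar points are pairs of reals (the product norm is Euclidean).
  cross a b is the 2D cross product (determinant of the matrix with columns a, b).\<close>
definition cross :: "real \<times> real \<Rightarrow> real \<times> real \<Rightarrow> real" where
  "cross a b = fst a * snd b - snd a * fst b"

text \<open>Every line parallel to
  the line through 0 with direction d (d nonzero) is of this form for a unique c.
  It is oriented along d; its left side is the set where cross d x > c.\<close>
definition line :: "real \<times> real \<Rightarrow> real \<Rightarrow> (real \<times> real) set" where
  "line d c = {x. cross d x = c}"

text \<open>A configuration: n, directions d i (i < n), offsets h i, so e_i = line (d i) (h i).
  Vertex v_i = e_i \<inter> e_(i+1), indices mod n.\<close>
definition vertex :: "nat \<Rightarrow> (nat \<Rightarrow> real \<times> real) \<Rightarrow> (nat \<Rightarrow> real) \<Rightarrow> nat \<Rightarrow> real \<times> real" where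
  "vertex n d h i = (THE v. v \<in> line (d (i mod n)) (h (i mod n))
                            \<inter> line (d (Suc i mod n)) (h (Suc i mod n)))"

text \<open>Oriented area (shoelace formula).\<close>
definition area :: "nat \<Rightarrow> (nat \<Rightarrow> real \<times> real) \<Rightarrow> (nat \<Rightarrow> real) \<Rightarrow> real" where
  "area n d h = (1/2) * (\<Sum>i<n. fst (vertex n d h i) * snd (vertex n d h (Suc i))
                               - fst (vertex n d h (Suc i)) * snd (vertex n d h i))"

text \<open>The side of Q lying on e_i is the segment from v_(i-1) to v_i.  Its sign is 1
  if the oriented line e_i (direction d i) is codirected with that segment, else -1.\<close>
definition side_sign :: "nat \<Rightarrow> (nat \<Rightarrow> real \<times> real) \<Rightarrow> (nat \<Rightarrow> real) \<Rightarrow> nat \<Rightarrow> real" where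
  "side_sign n d h i =
     (if \<exists>c>0. vertex n d h i - vertex n d h (i + n - 1) = c *\<^sub>R d i then 1 else -1)"

definition perimeter :: "nat \<Rightarrow> (nat \<Rightarrow> real \<times> real) \<Rightarrow> (nat \<Rightarrow> real) \<Rightarrow> real" where
  "perimeter n d h = (\<Sum>i<n. side_sign n d h i * dist (vertex n d h (i + n - 1)) (vertex n d h i))"

definition tangent_circle_line :: "real \<times> real \<Rightarrow> real \<Rightarrow> (real \<times> real) set \<Rightarrow> bool" where
  "tangent_circle_line c r L \<longleftrightarrow> (\<exists>!p. p \<in> sphere c r \<inter> L)"

definition tangential :: "nat \<Rightarrow> (nat \<Rightarrow> real \<times> real) \<Rightarrow> (nat \<Rightarrow> real) \<Rightarrow> bool" where
  "tangential n d h \<longleftrightarrow>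
     (\<exists>c r. r > 0 \<and> (\<forall>i<n. tangent_circle_line c r (line (d i) (h i))) \<and>
        ((\<forall>i<n. sphere c r \<subseteq> {x. cross (d i) x \<ge> h i}) \<or>
         (\<forall>i<n. sphere c r \<subseteq> {x. cross (d i) x \<le> h i})))"

text \<open>Critical point of the perimeter restricted to the level set |area| = 1:
  the derivative of the perimeter vanishes along every curve through h that
  stays (near t = 0) in the level set and is differentiable at 0.\<close>
definition critical_point :: "nat \<Rightarrow> (nat \<Rightarrow> real \<times> real) \<Rightarrow> (nat \<Rightarrow> real) \<Rightarrow> bool" where
  "critical_point n d h \<longleftrightarrow>
     (\<forall>\<gamma> :: real \<Rightarrow> nat \<Rightarrow> real.
        (\<forall>i<n. \<gamma> 0 i = h i) \<longrightarrow>
        (\<forall>i<n. (\<lambda>t. \<gamma> t i) differentiable (at 0)) \<longrightarrow>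
        eventually (\<lambda>t. \<bar>area n d (\<gamma> t)\<bar> = 1) (nhds 0) \<longrightarrow>
        ((\<lambda>t. perimeter n d (\<gamma> t)) has_real_derivative 0) (at 0))"

end

theory Submission
  imports Defs
begin



lemma norm_sq: "(norm (x::real\<times>real))\<^sup>2 = (fst x)\<^sup>2 + (snd x)\<^sup>2"
  by (cases x) (simp add: norm_Pair)

lemma cross_diff: "cross a (x - y) = cross a x - cross a y"
  and cross_add: "cross a (x + y) = cross a x + cross a y"
  and cross_scale: "cross a (c *\<^sub>R x) = c * cross a x"
  and cross_scale1: "cross (c *\<^sub>R a) x = c * cross a x"
  and cross_anti: "cross a b = - cross b a"
  and cross_self: "cross a a = 0"
  by (auto simp: cross_def algebra_simps)

lemma cross_ker:
  assumes "cross a z = 0" "cross b z = 0" "cross a b \<noteq> 0"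
  shows "z = 0"
proof -
  obtain a1 a2 b1 b2 z1 z2 where e: "a = (a1,a2)" "b = (b1,b2)" "z = (z1,z2)" by (cases a, cases b, cases z) auto
  have h1: "a1*z2 - a2*z1 = 0" "b1*z2 - b2*z1 = 0" "a1*b2 - a2*b1 \<noteq> 0" using assms by (auto simp: e cross_def)
  have "z1 * (a1*b2 - a2*b1) = 0" using h1 by algebra
  moreover have "z2 * (a1*b2 - a2*b1) = 0" using h1 by algebra
  ultimately show ?thesis using h1(3) by (simp add: e zero_prod_def)
qed

lemma cross_sol:
  assumes "cross a b \<noteq> 0"
  shows "cross a ((1/cross a b) *\<^sub>R (p *\<^sub>R b - q *\<^sub>R a)) = p"
    "cross b ((1/cross a b) *\<^sub>R (p *\<^sub>R b - q *\<^sub>R a)) = q"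
  using assms by (auto simp: cross_scale cross_diff cross_self cross_anti[of b a] field_simps)

lemma cross_solve:
  assumes "cross a b \<noteq> 0"
  shows "(cross a x = p \<and> cross b x = q) \<longleftrightarrow> x = (1/cross a b) *\<^sub>R (p *\<^sub>R b - q *\<^sub>R a)"
proof
  assume h: "cross a x = p \<and> cross b x = q"
  let ?y = "(1/cross a b) *\<^sub>R (p *\<^sub>R b - q *\<^sub>R a)"
  have "x - ?y = 0"
    by (rule cross_ker[OF _ _ assms]) (use h cross_sol[OF assms, of p q] in \<open>simp_all add: cross_diff\<close>)
  then show "x = ?y" by simp
qed (use cross_sol[OF assms] in auto)

lemma par:
  assumes "cross a w = 0" "a \<noteq> 0"
  shows "w = ((w \<bullet> a) / (norm a)\<^sup>2) *\<^sub>R a"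
proof -
  obtain a1 a2 w1 w2 where e: "a = (a1,a2)" "w = (w1,w2)" by (cases a, cases w) auto
  have n: "(norm a)\<^sup>2 = a1^2 + a2^2" by (simp add: norm_sq e)
  have "(norm a)^2 \<noteq> 0" using assms by simp
  hence nz: "a1^2 + a2^2 \<noteq> 0" using n by simp
  have h: "a1*w2 - a2*w1 = 0" using assms by (simp add: e cross_def)
  have "w1 * (a1^2+a2^2) = (w1*a1 + w2*a2) * a1" using h by algebra
  moreover have "w2 * (a1^2+a2^2) = (w1*a1 + w2*a2) * a2" using h by algebra
  ultimately show ?thesis using nz n unfolding e by (simp add: field_simps)
qed




locale cfg =
  fixes n :: nat and d :: "nat \<Rightarrow> real \<times> real"
  assumes n3: "n \<ge> 3" and dnz: "\<forall>i<n. d i \<noteq> 0"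
    and npar: "\<forall>i<n. \<forall>j<n. i \<noteq> j \<longrightarrow> cross (d i) (d j) \<noteq> 0"
begin

abbreviation V where "V h j \<equiv> vertex n d h j"

lemma ab: "j mod n \<noteq> Suc j mod n" "j mod n < n" "Suc j mod n < n"
proof -
  have "j mod n < n" using n3 by simp
  then show "j mod n \<noteq> Suc j mod n" "j mod n < n" "Suc j mod n < n"
    using n3 by (auto simp: mod_Suc Suc_lessI)
qed

lemma Dnz: "cross (d (j mod n)) (d (Suc j mod n)) \<noteq> 0"
  using npar ab by blast

definition vf :: "(nat \<Rightarrow> real) \<Rightarrow> nat \<Rightarrow> real \<times> real" where
  "vf h j = (1/cross (d (j mod n)) (d (Suc j mod n))) *\<^sub>R
      (h (j mod n) *\<^sub>R d (Suc j mod n) - h (Suc j mod n) *\<^sub>R d (j mod n))"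

lemma V_eq: "V h j = vf h j"
  unfolding vertex_def line_def vf_def
  by (rule the_equality) (use cross_solve[OF Dnz] in auto)

lemma V_cross1: "cross (d (j mod n)) (V h j) = h (j mod n)"
  and V_cross2: "cross (d (Suc j mod n)) (V h j) = h (Suc j mod n)"
  using cross_solve[OF Dnz[of j], where x="V h j" and p="h (j mod n)" and q="h (Suc j mod n)"]
  by (auto simp: V_eq vf_def)

lemma V_mod: "V h (j mod n) = V h j"
  unfolding vertex_def by (simp add: mod_Suc_eq)

lemma V_lin: "V (\<lambda>i. x * h i + y * k i) j = x *\<^sub>R V h j + y *\<^sub>R V k j"
  unfolding V_eq vf_def by (simp add: algebra_simps)

lemma V_loc: "(\<forall>i<n. h i = k i) \<Longrightarrow> V h j = V k j"
  unfolding V_eq vf_def using ab by simp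

lemma V_trans: "V (\<lambda>i. cross (d i) \<tau>) j = \<tau>"
  unfolding V_eq vf_def using cross_solve[OF Dnz[of j], where x="\<tau>" and p="cross (d (j mod n)) \<tau>" and q="cross (d (Suc j mod n)) \<tau>"] by auto

lemma idx: "j < n \<Longrightarrow> Suc (j + n - 1) mod n = j" "j < n \<Longrightarrow> Suc (j + n - 1) = j + n"
  using n3 by auto

lemma cross_dV: "j < n \<Longrightarrow> cross (d j) (V h j) = h j"
  "j < n \<Longrightarrow> cross (d j) (V h (j+n-1)) = h j"
  using V_cross1[of j h] V_cross2[of "j+n-1" h] idx by auto

definition cc :: "(nat \<Rightarrow> real) \<Rightarrow> nat \<Rightarrow> real" where
  "cc h j = ((V h j - V h (j+n-1)) \<bullet> d j) / (norm (d j))\<^sup>2"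

lemma c_eq: "j < n \<Longrightarrow> V h j - V h (j+n-1) = cc h j *\<^sub>R d j"
  unfolding cc_def by (rule par) (use cross_dV[of j h] dnz in \<open>auto simp: cross_diff\<close>)

lemma cc_lin: "cc (\<lambda>i. x * h i + y * k i) j = x * cc h j + y * cc k j"
  unfolding cc_def V_lin by (simp add: divide_inverse algebra_simps inner_diff_left)

lemma cc_loc: "(\<forall>i<n. h i = k i) \<Longrightarrow> cc h j = cc k j"
  unfolding cc_def using V_loc[of h k] by simp

end



context cfg begin

lemma sum_shift:
  fixes F :: "nat \<Rightarrow> real"
  assumes "\<forall>j. F (j mod n) = F j"
  shows "(\<Sum>j<n. F (j + m)) = (\<Sum>j<n. F j)"
proof (induction m)
  case 0 then show ?case by simp
next
  case (Suc m)
  define G where "G j = F (j + m)" for j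
  have s1: "(\<Sum>j<Suc n. G j) = G 0 + (\<Sum>j<n. G (Suc j))" by (rule sum.lessThan_Suc_shift)
  have s2: "(\<Sum>j<Suc n. G j) = (\<Sum>j<n. G j) + G n" by simp
  have "F (n+m) = F ((n + m) mod n)" using assms by metis
  also have "(n + m) mod n = m mod n" by simp
  also have "F (m mod n) = F m" using assms by metis
  finally have "G n = G 0" unfolding G_def by (simp add: add.commute)
  then have "(\<Sum>j<n. G (Suc j)) = (\<Sum>j<n. G j)" using s1 s2 by linarith
  then show ?case using Suc unfolding G_def by simp
qed

lemma perim: "perimeter n d h = (\<Sum>j<n. cc h j * norm (d j))"
  unfolding perimeter_def
proof (rule sum.cong[OF refl])
  fix j assume "j \<in> {..<n}"
  then have j: "j < n" by simp
  have dj: "d j \<noteq> 0" using dnz j by simp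
  have w: "V h j - V h (j+n-1) = cc h j *\<^sub>R d j" by (rule c_eq[OF j])
  have "dist (V h (j+n-1)) (V h j) = norm (V h j - V h (j+n-1))"
    by (simp add: dist_norm norm_minus_commute)
  also have "\<dots> = norm (cc h j *\<^sub>R d j)" by (simp only: w)
  also have "\<dots> = \<bar>cc h j\<bar> * norm (d j)" by simp
  finally have di: "dist (V h (j+n-1)) (V h j) = \<bar>cc h j\<bar> * norm (d j)" .
  have ss: "side_sign n d h j = (if cc h j > 0 then 1 else -1)"
    unfolding side_sign_def w using dj by auto
  show "side_sign n d h j * dist (V h (j+n-1)) (V h j) = cc h j * norm (d j)"
    unfolding ss di by auto
qed

lemma F_per: "\<forall>j. (\<lambda>i. cross (V h i) (V k (Suc i))) (j mod n) = cross (V h j) (V k (Suc j))"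
  by (metis V_mod mod_Suc_eq)

lemma F_per2: "\<forall>j. (\<lambda>i. cross (V h i) (V k i)) (j mod n) = cross (V h j) (V k j)"
  by (metis V_mod)

lemma Vjn: "V h (j + n) = V h j"
  by (metis V_mod mod_add_self2)

lemma area_eq: "area n d h = -1/2 * (\<Sum>j<n. cc h j * h j)"
proof -
  have "area n d h = 1/2 * (\<Sum>i<n. cross (V h i) (V h (Suc i)))"
    unfolding area_def cross_def by (simp add: algebra_simps)
  also have "(\<Sum>i<n. cross (V h i) (V h (Suc i))) = (\<Sum>j<n. cross (V h (j + (n-1))) (V h (Suc (j + (n-1)))))"
    using sum_shift[OF F_per[of h h], of "n-1"] by simp
  also have "\<dots> = (\<Sum>j<n. - (cc h j * h j))"
  proof (rule sum.cong[OF refl])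
    fix j assume "j \<in> {..<n}"
    then have j: "j < n" by simp
    have e1: "j + (n-1) = j+n-1" "Suc (j + n - 1) = j + n" using n3 by auto
    have "V h j = V h (j+n-1) + cc h j *\<^sub>R d j" using c_eq[OF j, of h] by (simp add: algebra_simps)
    then have "cross (V h (j+n-1)) (V h j) = cc h j * cross (V h (j+n-1)) (d j)"
      by (simp add: cross_add cross_scale cross_self)
    also have "\<dots> = - (cc h j * h j)" using cross_dV(2)[OF j, of h] cross_anti[of "V h (j+n-1)" "d j"] by simp
    finally show "cross (V h (j + (n-1))) (V h (Suc (j + (n-1)))) = - (cc h j * h j)"
      unfolding e1 Vjn .
  qed
  finally show ?thesis by (simp add: sum_negf)
qed

lemma cc_sym: "(\<Sum>j<n. cc h j * k j) = (\<Sum>j<n. cc k j * h j)"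
proof -
  have L: "(\<Sum>j<n. cc h j * k j) = (\<Sum>j<n. cross (V h j) (V k j)) - (\<Sum>j<n. cross (V h (j+n-1)) (V k j))"
    unfolding sum_subtractf[symmetric]
  proof (rule sum.cong[OF refl])
    fix j assume "j \<in> {..<n}" then have j: "j < n" by simp
    have "cc h j * k j = cross (cc h j *\<^sub>R d j) (V k j)" using cross_dV(1)[OF j, of k] by (simp add: cross_scale1)
    also have "\<dots> = cross (V h j - V h (j+n-1)) (V k j)" using c_eq[OF j, of h] by simp
    finally show "cc h j * k j = cross (V h j) (V k j) - cross (V h (j+n-1)) (V k j)"
      by (simp add: cross_def algebra_simps)
  qed
  have R: "(\<Sum>j<n. cc k j * h j) = (\<Sum>j<n. cross (V k j) (V h (j+n-1))) - (\<Sum>j<n. cross (V k (j+n-1)) (V h (j+n-1)))"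
    unfolding sum_subtractf[symmetric]
  proof (rule sum.cong[OF refl])
    fix j assume "j \<in> {..<n}" then have j: "j < n" by simp
    have "cc k j * h j = cross (cc k j *\<^sub>R d j) (V h (j+n-1))" using cross_dV(2)[OF j, of h] by (simp add: cross_scale1)
    also have "\<dots> = cross (V k j - V k (j+n-1)) (V h (j+n-1))" using c_eq[OF j, of k] by simp
    finally show "cc k j * h j = cross (V k j) (V h (j+n-1)) - cross (V k (j+n-1)) (V h (j+n-1))"
      by (simp add: cross_def algebra_simps)
  qed
  have sh: "(\<Sum>j<n. cross (V k (j+n-1)) (V h (j+n-1))) = (\<Sum>j<n. cross (V k j) (V h j))"
  proof -
    have "(\<Sum>j<n. cross (V k (j+n-1)) (V h (j+n-1))) = (\<Sum>j<n. cross (V k (j+(n-1))) (V h (j+(n-1))))"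
      using n3 by (intro sum.cong) auto
    also have "\<dots> = (\<Sum>j<n. cross (V k j) (V h j))" using sum_shift[OF F_per2[of k h], of "n-1"] by simp
    finally show ?thesis .
  qed
  have a1: "(\<Sum>j<n. cross (V k j) (V h (j+n-1))) = - (\<Sum>j<n. cross (V h (j+n-1)) (V k j))"
    by (simp add: sum_negf[symmetric] cross_anti[of "V k _"])
  have a2: "(\<Sum>j<n. cross (V k j) (V h j)) = - (\<Sum>j<n. cross (V h j) (V k j))"
    by (simp add: sum_negf[symmetric] cross_anti[of "V k _"])
  show ?thesis unfolding L R sh a1 a2 by simp
qed

end



lemma lin_sum:
  fixes F :: "(nat \<Rightarrow> real) \<Rightarrow> real"
  assumes lin: "\<And>h k x y. F (\<lambda>i. x * h i + y * k i) = x * F h + y * F k"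
    and loc: "\<And>h k. (\<forall>i<n. h i = k i) \<Longrightarrow> F h = F k"
  shows "F h = (\<Sum>i<n. h i * F (\<lambda>j. if j = i then 1 else 0))"
proof -
  define e where "e i = (\<lambda>j::nat. if j = i then (1::real) else 0)" for i :: nat
  have z: "F (\<lambda>i. 0) = 0" using lin[of 0 "\<lambda>i. 0" 0 "\<lambda>i. 0"] by simp
  have gen: "F (\<lambda>j. \<Sum>i\<in>S. h i * e i j) = (\<Sum>i\<in>S. h i * F (e i))" if "finite S" for S
    using that
  proof (induction S rule: finite_induct)
    case empty then show ?case using z by simp
  next
    case (insert a S)
    have "F (\<lambda>j. \<Sum>i\<in>insert a S. h i * e i j) = F (\<lambda>j. h a * e a j + 1 * (\<Sum>i\<in>S. h i * e i j))"
      using insert by simp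
    also have "\<dots> = h a * F (e a) + 1 * F (\<lambda>j. \<Sum>i\<in>S. h i * e i j)" by (rule lin)
    finally show ?case using insert by simp
  qed
  have d: "(\<Sum>i<n. h i * e i j) = h j" if "j < n" for j
  proof -
    have "(\<Sum>i<n. h i * e i j) = (\<Sum>i<n. if j = i then h i else 0)"
      by (rule sum.cong) (auto simp: e_def)
    also have "\<dots> = h j" using that by simp
    finally show ?thesis .
  qed
  have "F h = F (\<lambda>j. \<Sum>i<n. h i * e i j)"
    by (rule loc) (simp add: d)
  also have "\<dots> = (\<Sum>i<n. h i * F (e i))" by (rule gen) simp
  finally show ?thesis by (simp add: e_def)
qed

lemma lin_deriv:
  fixes F :: "(nat \<Rightarrow> real) \<Rightarrow> real"
  assumes lin: "\<And>h k x y. F (\<lambda>i. x * h i + y * k i) = x * F h + y * F k"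
    and loc: "\<And>h k. (\<forall>i<n. h i = k i) \<Longrightarrow> F h = F k"
    and der: "\<forall>i<n. ((\<lambda>t. \<gamma> t i) has_real_derivative g i) (at 0)"
  shows "((\<lambda>t. F (\<gamma> t)) has_real_derivative F g) (at 0)"
proof -
  have e: "F h = (\<Sum>i<n. h i * F (\<lambda>j. if j = i then 1 else 0))" for h
    by (rule lin_sum[OF lin loc])
  define E where "E i = F (\<lambda>j. if j = i then 1 else 0)" for i
  have e1: "(\<lambda>t. F (\<gamma> t)) = (\<lambda>t. \<Sum>i<n. \<gamma> t i * E i)" unfolding E_def by (rule ext) (rule e)
  have e2: "F g = (\<Sum>i<n. g i * E i)" unfolding E_def by (rule e)
  show ?thesis unfolding e1 e2
    by (rule DERIV_sum) (use der in \<open>auto intro!: DERIV_cmult_right\<close>)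
qed

definition pp :: "real \<times> real \<Rightarrow> real \<times> real" where "pp a = (- snd a, fst a)"

lemma lagr: "(cross a y)\<^sup>2 + (a \<bullet> y)\<^sup>2 = (norm a)\<^sup>2 * (norm y)\<^sup>2"
proof -
  obtain a1 a2 y1 y2 where e: "a = (a1,a2)" "y = (y1,y2)" by (cases a, cases y) auto
  have n: "(norm (a1,a2))\<^sup>2 = a1^2 + a2^2" "(norm (y1,y2))\<^sup>2 = y1^2 + y2^2" by (simp_all add: norm_sq)
  show ?thesis unfolding e n by (simp add: cross_def power2_eq_square algebra_simps)
qed

lemma cross_bound: "\<bar>cross a y\<bar> \<le> norm a * norm y"
proof -
  have "(cross a y)\<^sup>2 \<le> (norm a)\<^sup>2 * (norm y)\<^sup>2" using lagr[of a y] zero_le_power2[of "a \<bullet> y"]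
    by linarith
  then have "(cross a y)\<^sup>2 \<le> (norm a * norm y)\<^sup>2" by (simp add: power_mult_distrib)
  then show ?thesis using abs_le_square_iff[of "cross a y" "norm a * norm y"] by simp
qed

lemma pp_props: "cross a (pp a) = (norm a)\<^sup>2" "a \<bullet> pp a = 0" "norm (pp a) = norm a"
  by (cases a, simp add: pp_def cross_def norm_sq power2_eq_square norm_Pair)+

lemma perp_uniq:
  assumes "a \<noteq> 0" "a \<bullet> y = 0" "cross a y = k"
  shows "y = (k / (norm a)\<^sup>2) *\<^sub>R pp a"
proof -
  obtain a1 a2 y1 y2 where e: "a = (a1,a2)" "y = (y1,y2)" by (cases a, cases y) auto
  have n: "(norm (a1,a2))\<^sup>2 = a1^2 + a2^2" by (simp add: norm_sq)
  have "(norm a)^2 \<noteq> 0" using assms by simp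
  hence nz: "a1^2 + a2^2 \<noteq> 0" using n e by simp
  have h: "a1*y1 + a2*y2 = 0" "a1*y2 - a2*y1 = k" using assms by (auto simp: e cross_def)
  have "y1 * (a1^2+a2^2) = - k * a2" using h by algebra
  moreover have "y2 * (a1^2+a2^2) = k * a1" using h by algebra
  ultimately show ?thesis using nz n unfolding e by (simp add: pp_def field_simps)
qed

lemma zero_crit:
  assumes "cross z t = 0" "z \<bullet> t = 0" "t \<noteq> 0"
  shows "z = 0"
proof -
  have "(norm z)\<^sup>2 * (norm t)\<^sup>2 = 0" using lagr[of z t] assms by simp
  then show ?thesis using assms by simp
qed

lemma sphere_cross_ge: "x \<in> sphere c r \<Longrightarrow> cross a x \<ge> cross a c - norm a * r"
  and sphere_cross_le: "x \<in> sphere c r \<Longrightarrow> cross a x \<le> cross a c + norm a * r"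
proof -
  assume "x \<in> sphere c r"
  then have r: "norm (x - c) = r" by (simp add: dist_norm norm_minus_commute)
  have e: "cross a x = cross a c + cross a (x - c)" by (simp add: cross_diff)
  show "cross a x \<ge> cross a c - norm a * r" "cross a x \<le> cross a c + norm a * r"
    using cross_bound[of a "x - c"] unfolding e r by auto
qed

lemma tang_point:
  fixes c :: "real \<times> real" and m :: real
  assumes "a \<noteq> 0" and p_def: "p = c + (m / norm a) *\<^sub>R pp a"
  shows "p \<in> sphere c \<bar>m\<bar>" "cross a p = cross a c + m * norm a"
proof -
  show "p \<in> sphere c \<bar>m\<bar>" using assms pp_props(3)[of a] by (simp add: p_def dist_norm)
  show "cross a p = cross a c + m * norm a" using assms pp_props(1)[of a]
    by (simp add: p_def cross_add cross_scale power2_eq_square)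
qed

lemma tangent_unique:
  assumes "a \<noteq> 0" "p \<in> sphere c \<bar>m\<bar>" "cross a p = cross a c + m * norm a"
  shows "p = c + (m / norm a) *\<^sub>R pp a"
proof -
  define y where "y = p - c"
  have ny: "norm y = \<bar>m\<bar>" using assms(2) by (simp add: y_def dist_norm norm_minus_commute)
  have cy: "cross a y = m * norm a" using assms(3) by (simp add: y_def cross_diff)
  have "(a \<bullet> y)\<^sup>2 = 0" using lagr[of a y] unfolding ny cy by (simp add: power_mult_distrib)
  then have "a \<bullet> y = 0" by simp
  then have "y = (m * norm a / (norm a)\<^sup>2) *\<^sub>R pp a" using perp_uniq[OF assms(1) _ cy] by simp
  then have "y = (m / norm a) *\<^sub>R pp a" using assms(1) by (simp add: power2_eq_square)
  then show ?thesis by (simp add: y_def algebra_simps)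
qed




context cfg begin

lemma tang_iff: "tangential n d h \<longleftrightarrow> (\<exists>\<mu> \<tau>. \<mu> \<noteq> 0 \<and> (\<forall>j<n. h j = cross (d j) \<tau> + \<mu> * norm (d j)))"
proof
  assume "tangential n d h"
  then obtain c r where r: "r > 0" and T: "\<forall>i<n. tangent_circle_line c r (line (d i) (h i))"
    and S: "(\<forall>i<n. sphere c r \<subseteq> {x. cross (d i) x \<ge> h i}) \<or> (\<forall>i<n. sphere c r \<subseteq> {x. cross (d i) x \<le> h i})"
    unfolding tangential_def by blast
  have P: "\<exists>p. p \<in> sphere c r \<and> cross (d j) p = h j" if "j < n" for j
    using T that unfolding tangent_circle_line_def line_def by blast
  show "\<exists>\<mu> \<tau>. \<mu> \<noteq> 0 \<and> (\<forall>j<n. h j = cross (d j) \<tau> + \<mu> * norm (d j))"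
    using S
  proof
    assume L: "\<forall>i<n. sphere c r \<subseteq> {x. cross (d i) x \<ge> h i}"
    have "h j = cross (d j) c + (-r) * norm (d j)" if j: "j < n" for j
    proof -
      have dj: "d j \<noteq> 0" using dnz j by simp
      obtain p where p: "p \<in> sphere c r" "cross (d j) p = h j" using P[OF j] by blast
      have q: "c + (-r / norm (d j)) *\<^sub>R pp (d j) \<in> sphere c r"
        using tang_point(1)[OF dj refl, of c "-r"] r by simp
      have "cross (d j) (c + (-r / norm (d j)) *\<^sub>R pp (d j)) \<ge> h j" using L j q by blast
      moreover have "cross (d j) (c + (-r / norm (d j)) *\<^sub>R pp (d j)) = cross (d j) c + (-r) * norm (d j)"
        using tang_point(2)[OF dj refl, of c "-r"] .
      moreover have "h j \<ge> cross (d j) c - norm (d j) * r" using sphere_cross_ge[OF p(1), of "d j"] p(2) by simp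
      ultimately show ?thesis by (simp add: algebra_simps)
    qed
    then show ?thesis using r by (intro exI[of _ "-r"] exI[of _ c]) auto
  next
    assume L: "\<forall>i<n. sphere c r \<subseteq> {x. cross (d i) x \<le> h i}"
    have "h j = cross (d j) c + r * norm (d j)" if j: "j < n" for j
    proof -
      have dj: "d j \<noteq> 0" using dnz j by simp
      obtain p where p: "p \<in> sphere c r" "cross (d j) p = h j" using P[OF j] by blast
      have q: "c + (r / norm (d j)) *\<^sub>R pp (d j) \<in> sphere c r"
        using tang_point(1)[OF dj refl, of c "r"] r by simp
      have "cross (d j) (c + (r / norm (d j)) *\<^sub>R pp (d j)) \<le> h j" using L j q by blast
      moreover have "cross (d j) (c + (r / norm (d j)) *\<^sub>R pp (d j)) = cross (d j) c + r * norm (d j)"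
        using tang_point(2)[OF dj refl, of c "r"] .
      moreover have "h j \<le> cross (d j) c + norm (d j) * r" using sphere_cross_le[OF p(1), of "d j"] p(2) by simp
      ultimately show ?thesis by (simp add: algebra_simps)
    qed
    then show ?thesis using r by (intro exI[of _ "r"] exI[of _ c]) auto
  qed
next
  assume "\<exists>\<mu> \<tau>. \<mu> \<noteq> 0 \<and> (\<forall>j<n. h j = cross (d j) \<tau> + \<mu> * norm (d j))"
  then obtain \<mu> \<tau> where mu: "\<mu> \<noteq> 0" and H: "\<forall>j<n. h j = cross (d j) \<tau> + \<mu> * norm (d j)" by blast
  have tan: "tangent_circle_line \<tau> \<bar>\<mu>\<bar> (line (d j) (h j))" if j: "j < n" for j
  proof -
    have dj: "d j \<noteq> 0" using dnz j by simp
    show ?thesis unfolding tangent_circle_line_def line_def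
    proof (rule ex1I[of _ "\<tau> + (\<mu> / norm (d j)) *\<^sub>R pp (d j)"])
      show "\<tau> + (\<mu> / norm (d j)) *\<^sub>R pp (d j) \<in> sphere \<tau> \<bar>\<mu>\<bar> \<inter> {x. cross (d j) x = h j}"
        using tang_point[OF dj refl, of \<tau> \<mu>] H j by auto
    next
      fix p assume "p \<in> sphere \<tau> \<bar>\<mu>\<bar> \<inter> {x. cross (d j) x = h j}"
      then show "p = \<tau> + (\<mu> / norm (d j)) *\<^sub>R pp (d j)"
        using tangent_unique[OF dj, of p \<tau> \<mu>] H j by auto
    qed
  qed
  have side: "(\<forall>i<n. sphere \<tau> \<bar>\<mu>\<bar> \<subseteq> {x. cross (d i) x \<ge> h i}) \<or> (\<forall>i<n. sphere \<tau> \<bar>\<mu>\<bar> \<subseteq> {x. cross (d i) x \<le> h i})"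
  proof (cases "\<mu> < 0")
    case True
    have "sphere \<tau> \<bar>\<mu>\<bar> \<subseteq> {x. cross (d i) x \<ge> h i}" if i: "i < n" for i
    proof
      fix x assume x: "x \<in> sphere \<tau> \<bar>\<mu>\<bar>"
      show "x \<in> {x. cross (d i) x \<ge> h i}" using sphere_cross_ge[OF x, of "d i"] H i True by (simp add: algebra_simps)
    qed
    then show ?thesis by blast
  next
    case False
    have "sphere \<tau> \<bar>\<mu>\<bar> \<subseteq> {x. cross (d i) x \<le> h i}" if i: "i < n" for i
    proof
      fix x assume x: "x \<in> sphere \<tau> \<bar>\<mu>\<bar>"
      show "x \<in> {x. cross (d i) x \<le> h i}" using sphere_cross_le[OF x, of "d i"] H i False by (simp add: algebra_simps)
    qed
    then show ?thesis by blast
  qed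
  show "tangential n d h" unfolding tangential_def
    using mu tan side by (intro exI[of _ \<tau>] exI[of _ "\<bar>\<mu>\<bar>"]) auto
qed

lemma noncirc:
  assumes H: "\<forall>j<3. cross (d j) \<tau> = norm (d j)"
  shows False
proof -
  have dj: "d j \<noteq> 0" if "j < 3" for j using dnz n3 that by simp
  have t0: "\<tau> \<noteq> 0" using H dj[of 0] by (auto simp: cross_def)
  define \<delta> where "\<delta> j = (d j \<bullet> \<tau>) / norm (d j)" for j
  have sq: "(\<delta> j)\<^sup>2 = (norm \<tau>)\<^sup>2 - 1" if j: "j < 3" for j
  proof -
    have "(norm (d j))\<^sup>2 + (d j \<bullet> \<tau>)\<^sup>2 = (norm (d j))\<^sup>2 * (norm \<tau>)\<^sup>2" using lagr[of "d j" \<tau>] H j by simp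
    then show ?thesis using dj[OF j] unfolding \<delta>_def by (simp add: power_divide field_simps)
  qed
  have eqpair: False if ij: "i < 3" "j < 3" "i \<noteq> j" "\<delta> i = \<delta> j" for i j
  proof -
    define z where "z = norm (d j) *\<^sub>R d i - norm (d i) *\<^sub>R d j"
    have c1: "cross (x - y) a = cross x a - cross y a" for x y a by (simp add: cross_def algebra_simps)
    have "cross z \<tau> = norm (d j) * cross (d i) \<tau> - norm (d i) * cross (d j) \<tau>"
      unfolding z_def c1 cross_scale1 ..
    also have "\<dots> = 0" using H ij by simp
    finally have "cross z \<tau> = 0" .
    moreover have "z \<bullet> \<tau> = 0" using ij dj[of i] dj[of j] unfolding z_def \<delta>_def
      by (simp add: inner_diff_left field_simps)
    ultimately have "z = 0" using zero_crit t0 by blast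
    then have "cross z (d j) = 0" by (simp add: cross_def)
    then have "norm (d j) * cross (d i) (d j) = 0" unfolding z_def
      by (simp add: cross_anti[of _ "d j"] cross_diff cross_scale cross_self)
    then show False using npar dj[of j] ij n3 by auto
  qed
  have "\<delta> 1 = \<delta> 0 \<or> \<delta> 1 = - \<delta> 0" using sq[of 0] sq[of 1] power2_eq_iff[of "\<delta> 1" "\<delta> 0"] by simp
  moreover have "\<delta> 2 = \<delta> 0 \<or> \<delta> 2 = - \<delta> 0" using sq[of 0] sq[of 2] power2_eq_iff[of "\<delta> 2" "\<delta> 0"] by simp
  ultimately show False using eqpair[of 1 0] eqpair[of 2 0] eqpair[of 2 1] by auto
qed

end



lemma ev_pos:
  fixes f :: "real \<Rightarrow> real"
  assumes "isCont f 0" "f 0 > 0"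
  shows "eventually (\<lambda>t. f t > 0) (nhds 0)"
proof -
  have "(f \<longlongrightarrow> f 0) (at 0)" using assms(1) by (simp add: isCont_def)
  then have "eventually (\<lambda>t. 0 < f t) (at 0)" using assms(2) by (rule order_tendstoD(1))
  then show ?thesis using assms(2) by (simp add: eventually_nhds_conv_at)
qed

context cfg begin

definition Q :: "(nat \<Rightarrow> real) \<Rightarrow> (nat \<Rightarrow> real) \<Rightarrow> real" where
  "Q h k = -1/2 * (\<Sum>j<n. cc h j * k j)"

lemma area_Q: "area n d h = Q h h"
  unfolding Q_def area_eq ..

lemma perim_Q: "perimeter n d h = -2 * Q h (\<lambda>j. norm (d j))"
  unfolding Q_def perim by simp

lemma Q_sym: "Q h k = Q k h"
  unfolding Q_def using cc_sym by simp

lemma Q_lin1: "Q (\<lambda>i. x * h i + y * k i) m = x * Q h m + y * Q k m"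
  unfolding Q_def cc_lin by (simp add: algebra_simps sum.distrib sum_distrib_left)

lemma Q_lin2: "Q m (\<lambda>i. x * h i + y * k i) = x * Q m h + y * Q m k"
  using Q_lin1 Q_sym by metis

lemma Q_loc1: "(\<forall>i<n. h i = k i) \<Longrightarrow> Q h m = Q k m"
  unfolding Q_def using cc_loc[of h k] by simp

lemma Q_loc2: "(\<forall>i<n. h i = k i) \<Longrightarrow> Q m h = Q m k"
  using Q_loc1 Q_sym by metis

lemma cc_trans: "j < n \<Longrightarrow> cc (\<lambda>i. cross (d i) \<tau>) j = 0"
  using c_eq[of j "\<lambda>i. cross (d i) \<tau>"] V_trans[of \<tau>] dnz by auto

lemma Q_trans: "Q (\<lambda>i. cross (d i) \<tau>) k = 0"
  unfolding Q_def using cc_trans by simp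

lemma perim_lin: "perimeter n d (\<lambda>i. x * h i + y * k i) = x * perimeter n d h + y * perimeter n d k"
  unfolding perim_Q Q_lin1 by simp

lemma perim_loc: "(\<forall>i<n. h i = k i) \<Longrightarrow> perimeter n d h = perimeter n d k"
  unfolding perim_Q using Q_loc1 by metis

lemma area_scale: "area n d (\<lambda>i. r * k i) = r\<^sup>2 * area n d k"
proof -
  have e: "(\<lambda>i. r * k i) = (\<lambda>i. r * k i + 0 * k i)" by simp
  show ?thesis unfolding area_Q by (subst e, subst Q_lin1, subst e, subst Q_lin2) (simp add: power2_eq_square)
qed

lemma area_deriv:
  assumes der: "\<forall>i<n. ((\<lambda>t. \<gamma> t i) has_real_derivative g i) (at 0)"
    and h0: "\<forall>i<n. \<gamma> 0 i = h i"
  shows "((\<lambda>t. area n d (\<gamma> t)) has_real_derivative 2 * Q h g) (at 0)"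
proof -
  have dcc: "((\<lambda>t. cc (\<gamma> t) j) has_real_derivative cc g j) (at 0)" for j
    by (rule lin_deriv[where F="\<lambda>h. cc h j", OF cc_lin cc_loc der]) auto
  have "((\<lambda>t. -1/2 * (\<Sum>j<n. cc (\<gamma> t) j * \<gamma> t j)) has_real_derivative
          -1/2 * (\<Sum>j<n. cc g j * \<gamma> 0 j + g j * cc (\<gamma> 0) j)) (at 0)"
    by (intro DERIV_cmult DERIV_sum DERIV_mult dcc) (use der in auto)
  moreover have "-1/2 * (\<Sum>j<n. cc g j * \<gamma> 0 j + g j * cc (\<gamma> 0) j) = 2 * Q h g"
  proof -
    have "(\<Sum>j<n. cc g j * \<gamma> 0 j + g j * cc (\<gamma> 0) j) = (\<Sum>j<n. cc g j * h j) + (\<Sum>j<n. cc h j * g j)"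
      unfolding sum.distrib[symmetric]
      by (rule sum.cong) (use h0 cc_loc[of "\<gamma> 0" h] in auto)
    then show ?thesis unfolding Q_def using cc_sym[of g h] by simp
  qed
  ultimately show ?thesis unfolding area_Q[symmetric] area_eq by simp
qed

end



lemma dr_lemma:
  fixes sg qq aa :: real
  shows "((\<lambda>t. 1 / sqrt (1 + 2 * sg * qq * t + sg * aa * t^2)) has_real_derivative -(sg*qq)) (at 0)"
  by (auto intro!: derivative_eq_intros simp: field_simps)

context cfg begin

lemma crit_key:
  assumes A1: "\<bar>area n d h\<bar> = 1" and crit: "critical_point n d h"
  shows "perimeter n d v = area n d h * Q h v * perimeter n d h"
proof -
  define sg where "sg = area n d h"
  define qq where "qq = Q h v"
  define aa where "aa = Q v v"
  define phi where "phi t = 1 + 2 * sg * qq * t + sg * aa * t^2" for t :: real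
  define r where "r t = 1 / sqrt (phi t)" for t
  define \<gamma> where "\<gamma> t = (\<lambda>i. r t * h i + (t * r t) * v i)" for t
  have ss: "sg * sg = 1" using A1 unfolding sg_def by (auto simp: abs_if split: if_splits)
  have Ahv: "area n d (\<lambda>i. 1 * h i + t * v i) = sg + 2*t*qq + t^2*aa" for t
  proof -
    have "area n d (\<lambda>i. 1 * h i + t * v i) = Q h (\<lambda>i. 1 * h i + t * v i) + t * Q v (\<lambda>i. 1 * h i + t * v i)"
      unfolding area_Q Q_lin1 by simp
    also have "\<dots> = sg + 2*t*qq + t^2*aa"
      unfolding Q_lin2 sg_def qq_def aa_def area_Q using Q_sym[of v h] by (simp add: power2_eq_square algebra_simps)
    finally show ?thesis .
  qed
  have phi0: "phi 0 = 1" by (simp add: phi_def)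
  have dphi: "(phi has_real_derivative 2 * sg * qq) (at 0)"
    unfolding phi_def[abs_def] by (auto intro!: derivative_eq_intros)
  have dr: "(r has_real_derivative -(sg*qq)) (at 0)"
    unfolding r_def[abs_def] phi_def using dr_lemma .
  have r0: "r 0 = 1" by (simp add: r_def phi0)
  have dg: "((\<lambda>t. \<gamma> t i) has_real_derivative (-(sg*qq)) * h i + v i) (at 0)" for i
  proof -
    have "((\<lambda>t. r t * h i + (t * r t) * v i) has_real_derivative
        (-(sg*qq)) * h i + (0 * (-(sg*qq)) + 1 * r 0) * v i) (at 0)"
      by (intro DERIV_add DERIV_cmult_right DERIV_mult' DERIV_ident dr)
    then show ?thesis unfolding \<gamma>_def r0 by simp
  qed
  have g0: "\<forall>i<n. \<gamma> 0 i = h i" by (simp add: \<gamma>_def r0)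
  have diff: "\<forall>i<n. (\<lambda>t. \<gamma> t i) differentiable (at 0)"
    using dg real_differentiable_def by blast
  have evp: "eventually (\<lambda>t. phi t > 0) (nhds 0)"
    by (rule ev_pos[OF DERIV_isCont[OF dphi]]) (simp add: phi0)
  have ev: "eventually (\<lambda>t. \<bar>area n d (\<gamma> t)\<bar> = 1) (nhds 0)"
    using evp
  proof eventually_elim
    case (elim t)
    have g: "\<gamma> t = (\<lambda>i. r t * (1 * h i + t * v i))" unfolding \<gamma>_def by (simp add: algebra_simps)
    have "sg * area n d (\<lambda>i. 1 * h i + t * v i) = phi t"
      unfolding Ahv phi_def using ss by (simp add: algebra_simps power2_eq_square)
    then have a: "area n d (\<lambda>i. 1 * h i + t * v i) = sg * phi t"
      using ss by (metis mult.assoc mult_1)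
    have "(r t)\<^sup>2 = 1 / phi t" using elim by (simp add: r_def power_divide)
    then have "area n d (\<gamma> t) = sg" unfolding g area_scale a using elim by simp
    then show ?case using A1 sg_def by simp
  qed
  have d0: "((\<lambda>t. perimeter n d (\<gamma> t)) has_real_derivative 0) (at 0)"
    using crit g0 diff ev unfolding critical_point_def by blast
  have pe: "(\<lambda>t. perimeter n d (\<gamma> t)) = (\<lambda>t. r t * perimeter n d h + (t * r t) * perimeter n d v)"
    unfolding \<gamma>_def perim_lin ..
  have "((\<lambda>t. r t * perimeter n d h + (t * r t) * perimeter n d v) has_real_derivative
        (-(sg*qq)) * perimeter n d h + (0 * (-(sg*qq)) + 1 * r 0) * perimeter n d v) (at 0)"
    by (intro DERIV_add DERIV_cmult_right DERIV_mult' DERIV_ident dr)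
  then have "((\<lambda>t. perimeter n d (\<gamma> t)) has_real_derivative
        (-(sg*qq)) * perimeter n d h + perimeter n d v) (at 0)" unfolding pe r0 by simp
  then have "(-(sg*qq)) * perimeter n d h + perimeter n d v = 0" using d0 by (rule DERIV_unique)
  then show ?thesis unfolding sg_def qq_def by (simp add: algebra_simps)
qed

end



context cfg begin

lemma main:
  assumes A1: "\<bar>area n d h\<bar> = 1"
  shows "critical_point n d h \<longleftrightarrow> tangential n d h"
proof
  assume crit: "critical_point n d h"
  define sg where "sg = area n d h"
  define Ph where "Ph = perimeter n d h"
  define w where "w = (\<lambda>j. norm (d j))"
  define u where "u = (\<lambda>i. 2 * w i + (sg * Ph) * h i)"
  have sg0: "sg \<noteq> 0" using A1 sg_def by auto
  have Qu: "Q u v = 0" for v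
  proof -
    have e1: "Q u v = 2 * Q w v + (sg * Ph) * Q h v" unfolding u_def by (rule Q_lin1)
    have e2: "perimeter n d v = sg * Q h v * Ph" using crit_key[OF A1 crit] unfolding sg_def Ph_def .
    have e3: "perimeter n d v = -2 * Q w v" using perim_Q[of v] Q_sym[of v w] unfolding w_def by simp
    show ?thesis using e1 e2 e3 by (simp add: algebra_simps)
  qed
  have cu: "\<forall>j<n. cc u j = 0"
  proof -
    have "Q u (\<lambda>j. cc u j) = -1/2 * (\<Sum>j<n. (cc u j)\<^sup>2)" unfolding Q_def by (simp add: power2_eq_square)
    then have "(\<Sum>j<n. (cc u j)\<^sup>2) = 0" using Qu by simp
    then show ?thesis by (simp add: sum_nonneg_eq_0_iff)
  qed
  have Vu: "j < n \<longrightarrow> V u j = V u 0" for j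
  proof (induction j)
    case 0 then show ?case by simp
  next
    case (Suc j)
    show ?case
    proof
      assume j: "Suc j < n"
      have "V u (Suc j) - V u (Suc j + n - 1) = 0" using c_eq[OF j, of u] cu j by simp
      moreover have "Suc j + n - 1 = j + n" by simp
      ultimately have "V u (Suc j) = V u j" using Vjn by simp
      then show "V u (Suc j) = V u 0" using Suc j by simp
    qed
  qed
  define \<tau> where "\<tau> = V u 0"
  have ut: "u j = cross (d j) \<tau>" if "j < n" for j
    using cross_dV(1)[OF that, of u] Vu[of j] that \<tau>_def by simp
  show "tangential n d h"
  proof (cases "Ph = 0")
    case True
    have "\<forall>j<3. cross (d j) ((1/2) *\<^sub>R \<tau>) = norm (d j)"
    proof (intro allI impI)
      fix j :: nat assume "j < 3"
      then have "j < n" using n3 by simp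
      then have "2 * norm (d j) = cross (d j) \<tau>" using ut True unfolding u_def w_def by simp
      then show "cross (d j) ((1/2) *\<^sub>R \<tau>) = norm (d j)" by (simp add: cross_scale)
    qed
    then show ?thesis using noncirc by blast
  next
    case False
    have "h j = cross (d j) ((1/(sg*Ph)) *\<^sub>R \<tau>) + (-2/(sg*Ph)) * norm (d j)" if j: "j < n" for j
    proof -
      have "2 * norm (d j) + sg * Ph * h j = cross (d j) \<tau>" using ut[OF j] unfolding u_def w_def by simp
      then show ?thesis using False sg0 by (simp add: cross_scale field_simps)
    qed
    then show ?thesis unfolding tang_iff using False sg0
      by (intro exI[of _ "-2/(sg*Ph)"] exI[of _ "(1/(sg*Ph)) *\<^sub>R \<tau>"]) auto
  qed
next
  assume "tangential n d h"
  then obtain \<mu> \<tau> where mu: "\<mu> \<noteq> 0" and H: "\<forall>j<n. h j = cross (d j) \<tau> + \<mu> * norm (d j)"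
    unfolding tang_iff by blast
  define sg where "sg = area n d h"
  define w where "w = (\<lambda>j. norm (d j))"
  show "critical_point n d h"
    unfolding critical_point_def
  proof (intro allI impI)
    fix \<gamma> :: "real \<Rightarrow> nat \<Rightarrow> real"
    assume g0: "\<forall>i<n. \<gamma> 0 i = h i" and diff: "\<forall>i<n. (\<lambda>t. \<gamma> t i) differentiable (at 0)"
      and ev: "eventually (\<lambda>t. \<bar>area n d (\<gamma> t)\<bar> = 1) (nhds 0)"
    define g where "g i = deriv (\<lambda>t. \<gamma> t i) 0" for i
    have der: "\<forall>i<n. ((\<lambda>t. \<gamma> t i) has_real_derivative g i) (at 0)"
    proof (intro allI impI)
      fix i assume "i < n"
      then show "((\<lambda>t. \<gamma> t i) has_real_derivative g i) (at 0)"
        using diff DERIV_deriv_iff_real_differentiable[of "\<lambda>t. \<gamma> t i" 0] unfolding g_def by simp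
    qed
    have dA: "((\<lambda>t. area n d (\<gamma> t)) has_real_derivative 2 * Q h g) (at 0)"
      by (rule area_deriv[OF der g0])
    have a0: "area n d (\<gamma> 0) = sg"
    proof -
      have "Q (\<gamma> 0) (\<gamma> 0) = Q h (\<gamma> 0)" by (rule Q_loc1) (use g0 in simp)
      also have "\<dots> = Q h h" by (rule Q_loc2) (use g0 in simp)
      finally show ?thesis unfolding sg_def area_Q .
    qed
    have ss: "sg * sg = 1" using A1 unfolding sg_def by (auto simp: abs_if split: if_splits)
    have evs: "eventually (\<lambda>t. sg * area n d (\<gamma> t) > 0) (nhds 0)"
      by (rule ev_pos[OF DERIV_isCont[OF DERIV_cmult[OF dA]]]) (simp add: a0 ss)
    have eva: "eventually (\<lambda>t. area n d (\<gamma> t) = sg) (nhds 0)"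
      using ev evs
    proof eventually_elim
      case (elim t)
      have s1: "sg = 1 \<or> sg = -1" using A1 sg_def by linarith
      have s2: "area n d (\<gamma> t) = 1 \<or> area n d (\<gamma> t) = -1" using elim(1) by linarith
      show ?case using s1 s2 elim(2) by auto
    qed
    have "((\<lambda>t. area n d (\<gamma> t)) has_real_derivative 0) (at 0) \<longleftrightarrow> ((\<lambda>t. sg) has_real_derivative 0) (at 0)"
      by (rule DERIV_cong_ev[OF refl eva refl])
    then have "((\<lambda>t. area n d (\<gamma> t)) has_real_derivative 0) (at 0)" by simp
    then have "2 * Q h g = 0" by (rule DERIV_unique[OF dA])
    then have Qhg: "Q h g = 0" by simp
    have dP: "((\<lambda>t. perimeter n d (\<gamma> t)) has_real_derivative perimeter n d g) (at 0)"
      by (rule lin_deriv[where F="perimeter n d", OF perim_lin perim_loc der]) auto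
    have "Q h g = Q g (\<lambda>i. 1 * cross (d i) \<tau> + \<mu> * w i)"
      using Q_sym[of h g] Q_loc2[of h "\<lambda>i. 1 * cross (d i) \<tau> + \<mu> * w i" g] H w_def by simp
    also have "\<dots> = \<mu> * Q g w" unfolding Q_lin2 using Q_sym[of g] Q_trans by simp
    finally have "Q g w = 0" using Qhg mu by simp
    then have "perimeter n d g = 0" using perim_Q w_def by simp
    then show "((\<lambda>t. perimeter n d (\<gamma> t)) has_real_derivative 0) (at 0)" using dP by simp
  qed
qed

end


theorem mainTheorem5:
  fixes n :: nat and d :: "nat \<Rightarrow> real \<times> real" and h :: "nat \<Rightarrow> real"
  assumes "n \<ge> 3"
    and "\<forall>i<n. d i \<noteq> 0"
    and "\<forall>i<n. \<forall>j<n. i \<noteq> j \<longrightarrow> cross (d i) (d j) \<noteq> 0"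
    and "\<bar>area n d h\<bar> = 1"
  shows "critical_point n d h \<longleftrightarrow> tangential n d h"
proof -
  interpret cfg n d by (rule cfg.intro) (use assms in auto)
  show ?thesis by (rule main[OF assms(4)])
qed

end
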